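(* Let $(S,M)$ be a surface with marked points and empty boundary and $T$ an ideal triangulation with property (T3). Then the adjacency quiver $Q$ of $T$ satisfies condition $(\star)$ if and only if $T$ has property (T3$\tfrac12$).
   Context: $(S,M)$: $S$ compact, connected, oriented surface without boundary, $M$ a finite non-empty set of punctures. Arcs incident to a puncture are counted with multiplicity (an arc with both ends at the puncture counted twice). Property (T3): at each puncture there are at least three arcs of $T$ incident to it. Property (T3$\tfrac12$): $T$ has (T3) and every arc of $T$ has an endpoint at which at least four arcs are incident. The adjacency quiver $Q$ has the arcs as vertices and an arrow $i\to j$ for each puncture $p$ and each occurrence of $j$ immediately following $i$ counterclockwise around $p$ (equivalently, for each corner at $p$ of a triangle with sides $i,j$). For such an arrow $\alpha$, $g(\alpha)$ is the arrow $j\to\ell$ where $\ell$ follows $j$ counterclockwise around $p$, and $f(\alpha)$ is the arrow $j\to k$ where $k$ is the third side of the triangle, at the other endpoint of $j$ in that triangle. $n_\alpha$ denotes the size of the $g$-orbit of $\alpha$, i.e. the least $r>0$ with $g^r(\alpha)=\alpha$. Condition $(\star)$: for every arrow $\alpha$, $n_\alpha\ge 4$ or $n_{f(\alpha)}\ge 4$. *)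

theory Defs
  imports Main
begin

text \<open>Combinatorial model of an ideal triangulation T of a compact connected oriented
surface without boundary with punctures M (all vertices are punctures).
D is the finite set of darts (oriented sides of triangles, each side of a triangle
oriented counterclockwise w.r.t. the triangle).  alpha: fixed-point free involution
pairing the two darts of the same arc (the two sides glued along an arc).
phi: next dart counterclockwise around the boundary of the same triangle (3-cycles).
Self-folded triangles are allowed (a triangle cycle may contain d and alpha d).\<close>

definition ideal_triangulation :: "'d set \<Rightarrow> ('d \<Rightarrow> 'd) \<Rightarrow> ('d \<Rightarrow> 'd) \<Rightarrow> bool" where
  "ideal_triangulation D alpha phi \<longleftrightarrow>
     finite D \<and> D \<noteq> {} \<and>
     (\<forall>d\<in>D. alpha d \<in> D \<and> alpha d \<noteq> d \<and> alpha (alpha d) = d) \<and>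
     (\<forall>d\<in>D. phi d \<in> D \<and> phi d \<noteq> d \<and> phi (phi (phi d)) = d) \<and>
     (\<forall>d\<in>D. \<forall>e\<in>D. (d, e) \<in> ({(x, alpha x) | x. x \<in> D} \<union> {(x, phi x) | x. x \<in> D})\<^sup>*)"

definition arc :: "('d \<Rightarrow> 'd) \<Rightarrow> 'd \<Rightarrow> 'd set" where
  "arc alpha d = {d, alpha d}"

definition arcs :: "'d set \<Rightarrow> ('d \<Rightarrow> 'd) \<Rightarrow> 'd set set" where
  "arcs D alpha = arc alpha ` D"

text \<open>Dart ends: (d, True) is the head of d, (d, False) its tail.  The head of d is
identified with the tail of phi d (same triangle) and with the tail of alpha d
(same arc, opposite orientation).\<close>
definition end_rel :: "'d set \<Rightarrow> ('d \<Rightarrow> 'd) \<Rightarrow> ('d \<Rightarrow> 'd) \<Rightarrow> (('d \<times> bool) \<times> ('d \<times> bool)) set" where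
  "end_rel D alpha phi =
     {((d, True), (phi d, False)) | d. d \<in> D} \<union> {((d, True), (alpha d, False)) | d. d \<in> D}"

definition end_equiv :: "'d set \<Rightarrow> ('d \<Rightarrow> 'd) \<Rightarrow> ('d \<Rightarrow> 'd) \<Rightarrow> (('d \<times> bool) \<times> ('d \<times> bool)) set" where
  "end_equiv D alpha phi = (end_rel D alpha phi \<union> (end_rel D alpha phi)\<inverse>)\<^sup>*"

definition punctures :: "'d set \<Rightarrow> ('d \<Rightarrow> 'd) \<Rightarrow> ('d \<Rightarrow> 'd) \<Rightarrow> ('d \<times> bool) set set" where
  "punctures D alpha phi = {end_equiv D alpha phi `` {(d, b)} | d b. d \<in> D}"

definition incid_mult :: "'d set \<Rightarrow> ('d \<times> bool) set \<Rightarrow> nat" where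
  "incid_mult a P = card {d \<in> a. (d, True) \<in> P}"

definition valency :: "'d set \<Rightarrow> ('d \<Rightarrow> 'd) \<Rightarrow> ('d \<times> bool) set \<Rightarrow> nat" where
  "valency D alpha P = (\<Sum>a\<in>arcs D alpha. incid_mult a P)"

definition T3 :: "'d set \<Rightarrow> ('d \<Rightarrow> 'd) \<Rightarrow> ('d \<Rightarrow> 'd) \<Rightarrow> bool" where
  "T3 D alpha phi \<longleftrightarrow> (\<forall>P\<in>punctures D alpha phi. valency D alpha P \<ge> 3)"

definition T3half :: "'d set \<Rightarrow> ('d \<Rightarrow> 'd) \<Rightarrow> ('d \<Rightarrow> 'd) \<Rightarrow> bool" where
  "T3half D alpha phi \<longleftrightarrow> T3 D alpha phi \<and>
     (\<forall>a\<in>arcs D alpha. \<exists>P\<in>punctures D alpha phi.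
         incid_mult a P \<ge> 1 \<and> valency D alpha P \<ge> 4)"

text \<open>Adjacency quiver: vertices are the arcs, arrows are the corners of triangles.
The corner at the head of dart d lies between the sides d and phi d of the triangle;
going counterclockwise around the puncture the side of d follows the side of phi d,
so this corner is an arrow  arc(phi d) \<rightarrow> arc(d).\<close>
definition q_arrows :: "'d set \<Rightarrow> 'd set" where
  "q_arrows D = D"

definition q_src :: "('d \<Rightarrow> 'd) \<Rightarrow> ('d \<Rightarrow> 'd) \<Rightarrow> 'd \<Rightarrow> 'd set" where
  "q_src alpha phi d = arc alpha (phi d)"

definition q_tgt :: "('d \<Rightarrow> 'd) \<Rightarrow> 'd \<Rightarrow> 'd set" where
  "q_tgt alpha d = arc alpha d"

text \<open>g: next corner counterclockwise around the same puncture, i.e. cross the side d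
into the neighbouring triangle (dart alpha d, starting at the puncture) and take the
dart of that triangle ending at the puncture, phi^{-1}(alpha d) = phi(phi(alpha d)).
f: the corner at the other endpoint of the side d in the same triangle, i.e. the corner
at the head of phi^{-1} d = phi (phi d).\<close>
definition q_g :: "('d \<Rightarrow> 'd) \<Rightarrow> ('d \<Rightarrow> 'd) \<Rightarrow> 'd \<Rightarrow> 'd" where
  "q_g alpha phi d = phi (phi (alpha d))"

definition q_f :: "('d \<Rightarrow> 'd) \<Rightarrow> 'd \<Rightarrow> 'd" where
  "q_f phi d = phi (phi d)"

definition n_orbit :: "('d \<Rightarrow> 'd) \<Rightarrow> ('d \<Rightarrow> 'd) \<Rightarrow> 'd \<Rightarrow> nat" where
  "n_orbit alpha phi d = (LEAST r. r > 0 \<and> (q_g alpha phi ^^ r) d = d)"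

definition star_cond :: "'d set \<Rightarrow> ('d \<Rightarrow> 'd) \<Rightarrow> ('d \<Rightarrow> 'd) \<Rightarrow> bool" where
  "star_cond D alpha phi \<longleftrightarrow>
     (\<forall>d\<in>q_arrows D. n_orbit alpha phi d \<ge> 4 \<or> n_orbit alpha phi (q_f phi d) \<ge> 4)"

end

theory Submission
  imports Defs
begin

lemma it_facts:
  assumes "ideal_triangulation D alpha phi" "d \<in> D"
  shows "alpha d \<in> D" "alpha (alpha d) = d" "phi d \<in> D" "phi (phi (phi d)) = d" "finite D"
proof -
  note H = assms(1)[unfolded ideal_triangulation_def]
  have A: "finite D" by (rule conjunct1[OF H])
  have B: "\<forall>d\<in>D. alpha d \<in> D \<and> alpha d \<noteq> d \<and> alpha (alpha d) = d"
    by (rule conjunct1[OF conjunct2[OF conjunct2[OF H]]])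
  have C: "\<forall>d\<in>D. phi d \<in> D \<and> phi d \<noteq> d \<and> phi (phi (phi d)) = d"
    by (rule conjunct1[OF conjunct2[OF conjunct2[OF conjunct2[OF H]]]])
  have B': "alpha d \<in> D \<and> alpha d \<noteq> d \<and> alpha (alpha d) = d" using B assms(2) by (rule bspec)
  have C': "phi d \<in> D \<and> phi d \<noteq> d \<and> phi (phi (phi d)) = d" using C assms(2) by (rule bspec)
  show "alpha d \<in> D" "alpha (alpha d) = d" "phi d \<in> D" "phi (phi (phi d)) = d" "finite D"
    using A B' C' by blast+
qed

lemma g_in:
  assumes "ideal_triangulation D alpha phi" "d \<in> D"
  shows "q_g alpha phi d \<in> D"
proof -
  have "alpha d \<in> D" using it_facts[OF assms] by blast
  then have "phi (alpha d) \<in> D" using it_facts[OF assms(1)] by blast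
  then have "phi (phi (alpha d)) \<in> D" using it_facts[OF assms(1)] by blast
  then show ?thesis unfolding q_g_def .
qed

lemma g_inv1:
  assumes "ideal_triangulation D alpha phi" "d \<in> D"
  shows "alpha (phi (q_g alpha phi d)) = d"
proof -
  have "alpha d \<in> D" using it_facts[OF assms] by blast
  then have "phi (phi (phi (alpha d))) = alpha d" by (rule it_facts(4)[OF assms(1)])
  then show ?thesis unfolding q_g_def using it_facts(2)[OF assms] by simp
qed

lemma g_inv2:
  assumes "ideal_triangulation D alpha phi" "d \<in> D"
  shows "q_g alpha phi (alpha (phi d)) = d"
proof -
  have "phi d \<in> D" using it_facts[OF assms] by blast
  then have "alpha (alpha (phi d)) = phi d" by (rule it_facts(2)[OF assms(1)])
  then show ?thesis unfolding q_g_def using it_facts(4)[OF assms] by simp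
qed

lemma g_inj:
  assumes "ideal_triangulation D alpha phi"
  shows "inj_on (q_g alpha phi) D"
proof (rule inj_onI)
  fix a b assume "a \<in> D" "b \<in> D" "q_g alpha phi a = q_g alpha phi b"
  then show "a = b" using g_inv1[OF assms, of a] g_inv1[OF assms, of b] by metis
qed

lemma gpow_in:
  assumes "ideal_triangulation D alpha phi" "x \<in> D"
  shows "(q_g alpha phi ^^ k) x \<in> D"
  by (induction k) (auto simp: assms g_in)

lemma gpow_cancel:
  assumes "ideal_triangulation D alpha phi" "x \<in> D"
    and "(q_g alpha phi ^^ (i + m)) x = (q_g alpha phi ^^ i) x"
  shows "(q_g alpha phi ^^ m) x = x"
  using assms(3)
proof (induction i)
  case 0 then show ?case by simp
next
  case (Suc i)
  have "q_g alpha phi ((q_g alpha phi ^^ (i + m)) x) = q_g alpha phi ((q_g alpha phi ^^ i) x)"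
    using Suc.prems by simp
  then have "(q_g alpha phi ^^ (i + m)) x = (q_g alpha phi ^^ i) x"
    by (rule inj_onD[OF g_inj[OF assms(1)] _ gpow_in[OF assms(1,2)] gpow_in[OF assms(1,2)]])
  then show ?case using Suc.IH by simp
qed

lemma period_exists:
  assumes "ideal_triangulation D alpha phi" "x \<in> D"
  shows "\<exists>r. r > 0 \<and> (q_g alpha phi ^^ r) x = x"
proof -
  let ?h = "\<lambda>k. (q_g alpha phi ^^ k) x"
  have fin: "finite D" using it_facts[OF assms] by simp
  have "\<not> inj_on ?h {0..card D}"
  proof
    assume "inj_on ?h {0..card D}"
    then have "card (?h ` {0..card D}) = card {0..card D}" by (rule card_image)
    moreover have "?h ` {0..card D} \<subseteq> D" using gpow_in[OF assms] by auto
    ultimately have "card {0..card D} \<le> card D" using card_mono[OF fin] by metis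
    then have "Suc (card D) \<le> card D" by simp
    then show False by simp
  qed
  then obtain i j where ij: "i \<in> {0..card D}" "j \<in> {0..card D}" "i \<noteq> j" "?h i = ?h j"
    unfolding inj_on_def by blast
  show ?thesis
  proof (cases "i < j")
    case True
    then have "?h (i + (j - i)) = ?h i" using ij(4) by simp
    then have "?h (j - i) = x" by (rule gpow_cancel[OF assms])
    moreover have "j - i > 0" using True by simp
    ultimately show ?thesis by blast
  next
    case False
    then have "j < i" using ij(3) by simp
    then have "?h (j + (i - j)) = ?h j" using ij(4) by simp
    then have "?h (i - j) = x" by (rule gpow_cancel[OF assms])
    moreover have "i - j > 0" using \<open>j < i\<close> by simp
    ultimately show ?thesis by blast
  qed
qed

lemma n_props:
  assumes "ideal_triangulation D alpha phi" "x \<in> D"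
  shows "n_orbit alpha phi x > 0" "(q_g alpha phi ^^ n_orbit alpha phi x) x = x"
    "\<And>r. 0 < r \<Longrightarrow> r < n_orbit alpha phi x \<Longrightarrow> (q_g alpha phi ^^ r) x \<noteq> x"
proof -
  obtain r where r: "r > 0 \<and> (q_g alpha phi ^^ r) x = x" using period_exists[OF assms] by blast
  show "n_orbit alpha phi x > 0" "(q_g alpha phi ^^ n_orbit alpha phi x) x = x"
    using LeastI[of "\<lambda>r. r > 0 \<and> (q_g alpha phi ^^ r) x = x", OF r] unfolding n_orbit_def by auto
  show "\<And>r. 0 < r \<Longrightarrow> r < n_orbit alpha phi x \<Longrightarrow> (q_g alpha phi ^^ r) x \<noteq> x"
    unfolding n_orbit_def using not_less_Least by blast
qed

lemma orbit_inj:
  assumes "ideal_triangulation D alpha phi" "x \<in> D"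
  shows "inj_on (\<lambda>k. (q_g alpha phi ^^ k) x) {0..<n_orbit alpha phi x}"
proof (rule inj_onI)
  fix i j assume i: "i \<in> {0..<n_orbit alpha phi x}" and j: "j \<in> {0..<n_orbit alpha phi x}"
    and e: "(q_g alpha phi ^^ i) x = (q_g alpha phi ^^ j) x"
  show "i = j"
  proof (rule ccontr)
    assume "i \<noteq> j"
    then consider "i < j" | "j < i" by linarith
    then show False
    proof cases
      case 1
      then have "(q_g alpha phi ^^ (i + (j - i))) x = (q_g alpha phi ^^ i) x" using e by simp
      then have "(q_g alpha phi ^^ (j - i)) x = x" by (rule gpow_cancel[OF assms])
      then show False using n_props(3)[OF assms, of "j - i"] 1 j by (auto simp: less_diff_conv2)
    next
      case 2
      then have "(q_g alpha phi ^^ (j + (i - j))) x = (q_g alpha phi ^^ j) x" using e by simp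
      then have "(q_g alpha phi ^^ (i - j)) x = x" by (rule gpow_cancel[OF assms])
      then show False using n_props(3)[OF assms, of "i - j"] 2 i by (auto simp: less_diff_conv2)
    qed
  qed
qed

lemma orbit_range:
  assumes "ideal_triangulation D alpha phi" "x \<in> D"
  shows "range (\<lambda>k. (q_g alpha phi ^^ k) x) = (\<lambda>k. (q_g alpha phi ^^ k) x) ` {0..<n_orbit alpha phi x}"
proof -
  have "(q_g alpha phi ^^ k) x = (q_g alpha phi ^^ (k mod n_orbit alpha phi x)) x" for k
    using funpow_mod_eq[where f="q_g alpha phi" and n="n_orbit alpha phi x" and x=x and m=k] n_props[OF assms] by simp
  moreover have "k mod n_orbit alpha phi x \<in> {0..<n_orbit alpha phi x}" for k
    using n_props(1)[OF assms] by simp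
  ultimately show ?thesis by blast
qed

lemma card_orbit:
  assumes "ideal_triangulation D alpha phi" "x \<in> D"
  shows "card (range (\<lambda>k. (q_g alpha phi ^^ k) x)) = n_orbit alpha phi x"
  using orbit_range[OF assms] card_image[OF orbit_inj[OF assms]] by simp


lemma orb_g:
  "e \<in> range (\<lambda>k. (q_g alpha phi ^^ k) x) \<Longrightarrow> q_g alpha phi e \<in> range (\<lambda>k. (q_g alpha phi ^^ k) x)"
proof -
  assume "e \<in> range (\<lambda>k. (q_g alpha phi ^^ k) x)"
  then obtain k where "e = (q_g alpha phi ^^ k) x" by blast
  then have "q_g alpha phi e = (q_g alpha phi ^^ Suc k) x" by simp
  then show ?thesis by blast
qed

lemma orb_ginv:
  assumes "ideal_triangulation D alpha phi" "x \<in> D"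
    and "e \<in> range (\<lambda>k. (q_g alpha phi ^^ k) x)"
  shows "alpha (phi e) \<in> range (\<lambda>k. (q_g alpha phi ^^ k) x)"
proof -
  obtain k where k: "e = (q_g alpha phi ^^ k) x" using assms(3) by blast
  show ?thesis
  proof (cases k)
    case 0
    define n where "n = n_orbit alpha phi x"
    have "n > 0" "(q_g alpha phi ^^ n) x = x" using n_props[OF assms(1,2)] n_def by auto
    then have "e = q_g alpha phi ((q_g alpha phi ^^ (n - 1)) x)" using k 0
      by (metis Suc_diff_1 comp_apply funpow.simps(2) funpow_0)
    then have "alpha (phi e) = (q_g alpha phi ^^ (n - 1)) x"
      using g_inv1[OF assms(1) gpow_in[OF assms(1,2)]] by simp
    then show ?thesis by blast
  next
    case (Suc m)
    then have "e = q_g alpha phi ((q_g alpha phi ^^ m) x)" using k by simp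
    then have "alpha (phi e) = (q_g alpha phi ^^ m) x"
      using g_inv1[OF assms(1) gpow_in[OF assms(1,2)]] by simp
    then show ?thesis by blast
  qed
qed

lemma class_eq:
  assumes "ideal_triangulation D alpha phi" "x \<in> D"
  shows "end_equiv D alpha phi `` {(x, True)} =
    {(e, True) | e. e \<in> range (\<lambda>k. (q_g alpha phi ^^ k) x)} \<union>
    {(alpha e, False) | e. e \<in> range (\<lambda>k. (q_g alpha phi ^^ k) x)}" (is "?L = ?S")
proof
  let ?O = "range (\<lambda>k. (q_g alpha phi ^^ k) x)"
  have OD: "?O \<subseteq> D" using gpow_in[OF assms] by auto
  note F = it_facts[OF assms(1)]
  show "?L \<subseteq> ?S"
  proof
    fix y assume "y \<in> ?L"
    then have "((x, True), y) \<in> (end_rel D alpha phi \<union> (end_rel D alpha phi)\<inverse>)\<^sup>*"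
      unfolding end_equiv_def by simp
    then show "y \<in> ?S"
    proof (induction rule: rtrancl_induct)
      case base
      have "x \<in> ?O" by (metis funpow_0 rangeI)
      then show ?case by blast
    next
      case (step y z)
      from step.IH consider e where "e \<in> ?O" "y = (e, True)" | e where "e \<in> ?O" "y = (alpha e, False)"
        by blast
      then show ?case
      proof cases
        case 1
        have eD: "e \<in> D" using 1 OD by blast
        have "z = (phi e, False) \<or> z = (alpha e, False)"
          using step.hyps(2) 1 unfolding end_rel_def by auto
        moreover have "(phi e, False) = (alpha (alpha (phi e)), False)" using F eD by simp
        moreover have "alpha (phi e) \<in> ?O" using orb_ginv[OF assms 1(1)] .
        ultimately show ?thesis using 1 by blast
      next
        case 2
        have eD: "e \<in> D" using 2 OD by blast
        from step.hyps(2) 2 obtain w where w: "w \<in> D" "z = (w, True)" "phi w = alpha e \<or> alpha w = alpha e"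
          unfolding end_rel_def by auto
        show ?thesis
        proof (cases "phi w = alpha e")
          case True
          then have "w = q_g alpha phi e" using F w(1) unfolding q_g_def by metis
          then show ?thesis using w orb_g[OF 2(1)] by blast
        next
          case False
          then have "w = e" using w F eD by metis
          then show ?thesis using w 2 by blast
        qed
      qed
    qed
  qed
  show "?S \<subseteq> ?L"
  proof -
    let ?R = "(end_rel D alpha phi \<union> (end_rel D alpha phi)\<inverse>)\<^sup>*"
    have A: "((x, True), ((q_g alpha phi ^^ k) x, True)) \<in> ?R" for k
    proof (induction k)
      case 0 then show ?case by simp
    next
      case (Suc k)
      let ?e = "(q_g alpha phi ^^ k) x"
      have eD: "?e \<in> D" using gpow_in[OF assms] .
      have gD: "q_g alpha phi ?e \<in> D" using g_in[OF assms(1) eD] .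
      have 1: "((?e, True), (alpha ?e, False)) \<in> end_rel D alpha phi"
        unfolding end_rel_def using eD by blast
      have "phi (q_g alpha phi ?e) = alpha ?e" using F eD unfolding q_g_def by simp
      then have 2: "((q_g alpha phi ?e, True), (alpha ?e, False)) \<in> end_rel D alpha phi"
        unfolding end_rel_def using gD by force
      have "((?e, True), (q_g alpha phi ?e, True)) \<in> ?R"
        using 1 2 by (meson UnI1 UnI2 converse_iff r_into_rtrancl rtrancl_trans)
      then show ?case using Suc.IH by (simp add: rtrancl_trans)
    qed
    have B: "((x, True), (alpha ((q_g alpha phi ^^ k) x), False)) \<in> ?R" for k
    proof -
      have "(((q_g alpha phi ^^ k) x, True), (alpha ((q_g alpha phi ^^ k) x), False)) \<in> end_rel D alpha phi"
        unfolding end_rel_def using gpow_in[OF assms] by blast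
      then show ?thesis using A[of k] by (meson UnI1 r_into_rtrancl rtrancl_trans)
    qed
    show ?thesis unfolding end_equiv_def using A B by blast
  qed
qed


lemma arcs_disj:
  assumes "ideal_triangulation D alpha phi" "a \<in> arcs D alpha" "b \<in> arcs D alpha" "a \<noteq> b"
  shows "a \<inter> b = {}"
proof -
  note F = it_facts[OF assms(1)]
  obtain d1 d2 where d: "d1 \<in> D" "d2 \<in> D" "a = {d1, alpha d1}" "b = {d2, alpha d2}"
    using assms(2,3) unfolding arcs_def arc_def by auto
  show ?thesis
  proof (rule ccontr)
    assume "a \<inter> b \<noteq> {}"
    then obtain y where "y \<in> a" "y \<in> b" by blast
    have key: "{e, alpha e} = {y, alpha y}" if "e \<in> D" "y \<in> {e, alpha e}" for e
    proof (cases "y = e")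
      case True then show ?thesis by simp
    next
      case False
      then have "y = alpha e" using that(2) by blast
      then have "alpha y = e" using it_facts(2)[OF assms(1) that(1)] by simp
      then show ?thesis using \<open>y = alpha e\<close> by (simp add: insert_commute)
    qed
    have "a = {y, alpha y}" using key[of d1] d \<open>y \<in> a\<close> by simp
    moreover have "b = {y, alpha y}" using key[of d2] d \<open>y \<in> b\<close> by simp
    ultimately have "a = b" by simp
    then show False using assms(4) by simp
  qed
qed

lemma valency_eq:
  assumes "ideal_triangulation D alpha phi" "x \<in> D"
  shows "valency D alpha (end_equiv D alpha phi `` {(x, True)}) = n_orbit alpha phi x"
proof -
  let ?O = "range (\<lambda>k. (q_g alpha phi ^^ k) x)"
  have OD: "?O \<subseteq> D" using gpow_in[OF assms] by auto
  note F = it_facts[OF assms(1)]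
  have fin: "finite D" using F assms(2) by blast
  have inc: "incid_mult a (end_equiv D alpha phi `` {(x, True)}) = card (a \<inter> ?O)" for a
    unfolding incid_mult_def class_eq[OF assms]
    by (rule arg_cong[where f=card]) auto
  have finA: "finite (arcs D alpha)" unfolding arcs_def using fin by simp
  have "(\<Sum>a\<in>arcs D alpha. card (a \<inter> ?O)) = card (\<Union>a\<in>arcs D alpha. a \<inter> ?O)"
  proof (rule card_UN_disjoint[symmetric])
    show "finite (arcs D alpha)" by fact
    show "\<forall>a\<in>arcs D alpha. finite (a \<inter> ?O)" unfolding arcs_def arc_def by auto
    show "\<forall>a\<in>arcs D alpha. \<forall>b\<in>arcs D alpha. a \<noteq> b \<longrightarrow> a \<inter> ?O \<inter> (b \<inter> ?O) = {}"
      using arcs_disj[OF assms(1)] by blast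
  qed
  also have "(\<Union>a\<in>arcs D alpha. a \<inter> ?O) = ?O"
  proof
    show "(\<Union>a\<in>arcs D alpha. a \<inter> ?O) \<subseteq> ?O" by blast
    show "?O \<subseteq> (\<Union>a\<in>arcs D alpha. a \<inter> ?O)"
    proof
      fix y assume y: "y \<in> ?O"
      then have "y \<in> D" using OD by blast
      then have "arc alpha y \<in> arcs D alpha" unfolding arcs_def by blast
      moreover have "y \<in> arc alpha y" unfolding arc_def by simp
      ultimately show "y \<in> (\<Union>a\<in>arcs D alpha. a \<inter> ?O)" using y by blast
    qed
  qed
  finally show ?thesis unfolding valency_def inc using card_orbit[OF assms] by simp
qed


lemma equiv_sym:
  assumes "(p, q) \<in> end_equiv D alpha phi"
  shows "(q, p) \<in> end_equiv D alpha phi"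
proof -
  let ?S = "end_rel D alpha phi \<union> (end_rel D alpha phi)\<inverse>"
  have "sym ?S" by (simp add: sym_Un_converse)
  then have "sym (?S\<^sup>*)" by (rule sym_rtrancl)
  then show ?thesis using assms unfolding end_equiv_def by (meson symD)
qed

lemma equiv_trans:
  assumes "(p, q) \<in> end_equiv D alpha phi" "(q, r) \<in> end_equiv D alpha phi"
  shows "(p, r) \<in> end_equiv D alpha phi"
  using assms unfolding end_equiv_def by (rule rtrancl_trans)

lemma equiv_mem:
  assumes "p \<in> end_equiv D alpha phi `` {q}"
  shows "end_equiv D alpha phi `` {p} = end_equiv D alpha phi `` {q}"
  using assms equiv_sym equiv_trans by blast

lemma equiv_refl: "p \<in> end_equiv D alpha phi `` {p}"
  unfolding end_equiv_def by simp

lemma punct_repr: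
  assumes "ideal_triangulation D alpha phi" "P \<in> punctures D alpha phi"
  shows "\<exists>y\<in>D. P = end_equiv D alpha phi `` {(y, True)}"
proof -
  note F = it_facts[OF assms(1)]
  obtain d b where db: "d \<in> D" "P = end_equiv D alpha phi `` {(d, b)}"
    using assms(2) unfolding punctures_def by blast
  show ?thesis
  proof (cases b)
    case True then have "P = end_equiv D alpha phi `` {(d, True)}" using db by simp
    then show ?thesis using db(1) by blast
  next
    case False
    have "((alpha d, True), (d, False)) \<in> end_rel D alpha phi"
      unfolding end_rel_def using F db(1) by force
    then have "(d, False) \<in> end_equiv D alpha phi `` {(alpha d, True)}"
      unfolding end_equiv_def by blast
    then have "end_equiv D alpha phi `` {(d, False)} = end_equiv D alpha phi `` {(alpha d, True)}"
      by (rule equiv_mem)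
    then have "P = end_equiv D alpha phi `` {(alpha d, True)}"
      using db False by simp
    then show ?thesis using F db(1) by blast
  qed
qed

lemma alpha_phi2:
  assumes "ideal_triangulation D alpha phi" "d \<in> D"
  shows "end_equiv D alpha phi `` {(alpha d, True)} = end_equiv D alpha phi `` {(phi (phi d), True)}"
proof -
  note F = it_facts[OF assms(1)]
  have 1: "((alpha d, True), (d, False)) \<in> end_rel D alpha phi"
    unfolding end_rel_def using F assms(2) by force
  have 2: "((phi (phi d), True), (d, False)) \<in> end_rel D alpha phi"
    unfolding end_rel_def using F assms(2) by force
  have m1: "(d, False) \<in> end_equiv D alpha phi `` {(alpha d, True)}"
    using 1 unfolding end_equiv_def by blast
  have m2: "(d, False) \<in> end_equiv D alpha phi `` {(phi (phi d), True)}"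
    using 2 unfolding end_equiv_def by blast
  have e1: "end_equiv D alpha phi `` {(d, False)} = end_equiv D alpha phi `` {(alpha d, True)}"
    using m1 by (rule equiv_mem)
  have e2: "end_equiv D alpha phi `` {(d, False)} = end_equiv D alpha phi `` {(phi (phi d), True)}"
    using m2 by (rule equiv_mem)
  show ?thesis by (simp only: e1[symmetric] e2[symmetric])
qed

lemma incid_iff:
  "incid_mult (arc alpha d) P \<ge> 1 \<longleftrightarrow> (d, True) \<in> P \<or> (alpha d, True) \<in> P"
proof -
  have "finite {e \<in> arc alpha d. (e, True) \<in> P}" unfolding arc_def by simp
  then show ?thesis unfolding incid_mult_def arc_def
    by (simp add: Suc_le_eq card_gt_0_iff) blast
qed

theorem lemma2p5:
  fixes D :: "'d set" and alpha phi :: "'d \<Rightarrow> 'd"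
  assumes "ideal_triangulation D alpha phi"
    and "T3 D alpha phi"
  shows "star_cond D alpha phi \<longleftrightarrow> T3half D alpha phi"
proof
  note F = it_facts[OF assms(1)]
  have clP: "y \<in> D \<Longrightarrow> end_equiv D alpha phi `` {(y, True)} \<in> punctures D alpha phi" for y
    unfolding punctures_def by blast
  assume st: "star_cond D alpha phi"
  show "T3half D alpha phi" unfolding T3half_def
  proof (intro conjI assms(2) ballI)
    fix a assume "a \<in> arcs D alpha"
    then obtain d where d: "d \<in> D" "a = arc alpha d" unfolding arcs_def by blast
    have p2: "phi (phi d) \<in> D" using F(3)[OF F(3)[OF d(1)]] .
    have "n_orbit alpha phi d \<ge> 4 \<or> n_orbit alpha phi (q_f phi d) \<ge> 4"
      using st d(1) unfolding star_cond_def q_arrows_def by blast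
    then show "\<exists>P\<in>punctures D alpha phi. 1 \<le> incid_mult a P \<and> 4 \<le> valency D alpha P"
    proof
      assume h: "n_orbit alpha phi d \<ge> 4"
      let ?P = "end_equiv D alpha phi `` {(d, True)}"
      have "(d, True) \<in> ?P" by (rule equiv_refl)
      then have "1 \<le> incid_mult a ?P" unfolding d(2) incid_iff by blast
      moreover have "4 \<le> valency D alpha ?P" unfolding valency_eq[OF assms(1) d(1)] by (rule h)
      ultimately show ?thesis using clP[OF d(1)] by blast
    next
      assume h: "n_orbit alpha phi (q_f phi d) \<ge> 4"
      let ?P = "end_equiv D alpha phi `` {(phi (phi d), True)}"
      have "(alpha d, True) \<in> end_equiv D alpha phi `` {(alpha d, True)}" by (rule equiv_refl)
      then have "(alpha d, True) \<in> ?P" unfolding alpha_phi2[OF assms(1) d(1)] .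
      then have "1 \<le> incid_mult a ?P" unfolding d(2) incid_iff by blast
      moreover have "4 \<le> valency D alpha ?P" unfolding valency_eq[OF assms(1) p2]
        using h unfolding q_f_def .
      ultimately show ?thesis using clP[OF p2] by blast
    qed
  qed
next
  note F = it_facts[OF assms(1)]
  assume th: "T3half D alpha phi"
  show "star_cond D alpha phi" unfolding star_cond_def q_arrows_def q_f_def
  proof
    fix d assume d: "d \<in> D"
    have p2: "phi (phi d) \<in> D" using F(3)[OF F(3)[OF d]] .
    have "arc alpha d \<in> arcs D alpha" unfolding arcs_def using d by blast
    then obtain P where P: "P \<in> punctures D alpha phi" "1 \<le> incid_mult (arc alpha d) P"
      "4 \<le> valency D alpha P" using th unfolding T3half_def by blast
    obtain y where y: "y \<in> D" "P = end_equiv D alpha phi `` {(y, True)}"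
      using punct_repr[OF assms(1) P(1)] by blast
    from P(2) have "(d, True) \<in> P \<or> (alpha d, True) \<in> P" unfolding incid_iff .
    then show "4 \<le> n_orbit alpha phi d \<or> 4 \<le> n_orbit alpha phi (phi (phi d))"
    proof
      assume "(d, True) \<in> P"
      then have "end_equiv D alpha phi `` {(d, True)} = P" unfolding y(2) by (rule equiv_mem)
      then have "valency D alpha P = n_orbit alpha phi d" using valency_eq[OF assms(1) d] by simp
      then show ?thesis using P(3) by simp
    next
      assume "(alpha d, True) \<in> P"
      then have "end_equiv D alpha phi `` {(alpha d, True)} = P" unfolding y(2) by (rule equiv_mem)
      then have "end_equiv D alpha phi `` {(phi (phi d), True)} = P"
        unfolding alpha_phi2[OF assms(1) d] .
      then have "valency D alpha P = n_orbit alpha phi (phi (phi d))" using valency_eq[OF assms(1) p2] by simp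
      then show ?thesis using P(3) by simp
    qed
  qed
qed

end
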